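(* Let $A \in \mathbb{C}^{n \times n}$, and fix $A^-\in A\{1\}$ and $A^{GD}\in A\{GD\}$. Let $A^{GD1}=A^{GD}AA^{-}$. Then: (i) $A^{GD1}$ satisfies $AA^{GD1}A=A$ and $A^{GD1}AA^{GD1}=A^{GD1}$; (ii) $A^mA^{GD1} =A^mA^{-}$ and $A^{GD1}A^m = A^{GD}A^m$ for every positive integer $m$; (iii) $AA^{GD1}=P_{R(A),N(AA^{-})}$; (iv) $A^{GD1}A=P_{R(A^{GD}A),N(A)}$.
   Context: For $A\in\mathbb{C}^{n\times n}$, the index $ind(A)$ is the smallest nonnegative integer $k$ with $\mathrm{rank}(A^k)=\mathrm{rank}(A^{k+1})$. $A\{1\}$ denotes the set of inner inverses of $A$, i.e. matrices $X$ with $AXA=A$. With $k=ind(A)$, $A\{GD\}$ denotes the set of G-Drazin inverses of $A$, i.e. matrices $X\in\mathbb{C}^{n\times n}$ with $AXA=A$, $XA^{k+1}=A^k$ and $A^{k+1}X=A^k$. $R(\cdot)$ and $N(\cdot)$ denote range and null space, and $P_{S,T}$ denotes the (oblique) projector onto the subspace $S$ along the subspace $T$. *)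

theory Defs
  imports "HOL-Analysis.Analysis"
begin

type_synonym 'n cmat = "complex ^'n ^'n"

primrec matpow :: "'a::comm_ring_1 ^'n^'n \<Rightarrow> nat \<Rightarrow> 'a^'n^'n" where
  "matpow A 0 = mat 1"
| "matpow A (Suc k) = matpow A k ** A"

definition ind :: "complex^'n^'n \<Rightarrow> nat" where
  "ind A = (LEAST k. rank (matpow A k) = rank (matpow A (Suc k)))"

definition inner_inverses :: "complex^'n^'n \<Rightarrow> (complex^'n^'n) set" where
  "inner_inverses A = {X. A ** X ** A = A}"

definition GD_inverses :: "complex^'n^'n \<Rightarrow> (complex^'n^'n) set" where
  "GD_inverses A = {X. A ** X ** A = A
      \<and> X ** matpow A (Suc (ind A)) = matpow A (ind A)
      \<and> matpow A (Suc (ind A)) ** X = matpow A (ind A)}"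

definition range_mat :: "'a::semiring_1^'n^'m \<Rightarrow> ('a^'m) set" where
  "range_mat A = {A *v x | x. True}"

definition null_mat :: "'a::semiring_1^'n^'m \<Rightarrow> ('a^'n) set" where
  "null_mat A = {x. A *v x = 0}"

definition is_projector :: "complex^'n^'n \<Rightarrow> (complex^'n) set \<Rightarrow> (complex^'n) set \<Rightarrow> bool" where
  "is_projector P S T \<longleftrightarrow> S \<inter> T = {0}
      \<and> (\<forall>z. \<exists>x\<in>S. \<exists>y\<in>T. z = x + y)
      \<and> (\<forall>x\<in>S. P *v x = x) \<and> (\<forall>y\<in>T. P *v y = 0)"

end

theory Submission
  imports Defs
begin

lemma matpow_comm: "matpow A k ** A = A ** matpow A k"
  by (induction k) (simp_all add: matrix_mul_lid matrix_mul_rid matrix_mul_assoc[symmetric])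

theorem theorem2p3:
  fixes A Am AGD :: "complex^'n^'n"
  assumes "Am \<in> inner_inverses A"
    and "AGD \<in> GD_inverses A"
  defines "AGD1 \<equiv> AGD ** A ** Am"
  shows "(A ** AGD1 ** A = A \<and> AGD1 ** A ** AGD1 = AGD1)
    \<and> (\<forall>m::nat. m \<ge> 1 \<longrightarrow>
           matpow A m ** AGD1 = matpow A m ** Am \<and> AGD1 ** matpow A m = AGD ** matpow A m)
    \<and> is_projector (A ** AGD1) (range_mat A) (null_mat (A ** Am))
    \<and> is_projector (AGD1 ** A) (range_mat (AGD ** A)) (null_mat A)"
proof -
  have M: "A ** Am ** A = A" using assms(1) by (simp add: inner_inverses_def)
  have G: "A ** AGD ** A = A" using assms(2) by (simp add: GD_inverses_def)
  have Gb: "X ** A ** AGD ** A = X ** A" for X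
    by (metis G matrix_mul_assoc)
  have Mb: "X ** A ** Am ** A = X ** A" for X
    by (metis M matrix_mul_assoc)
  note S = matrix_mul_assoc G Gb M Mb
  have i1: "A ** AGD1 ** A = A"
  proof -
    have "A ** AGD1 ** A = (A ** AGD ** A) ** Am ** A" unfolding AGD1_def by (simp add: matrix_mul_assoc)
    also have "\<dots> = A" using G M by (simp add: matrix_mul_assoc)
    finally show ?thesis .
  qed
  have GAGA: "AGD ** A ** AGD ** A = AGD ** A"
  proof -
    have "AGD ** A ** AGD ** A = AGD ** (A ** AGD ** A)" by (simp add: matrix_mul_assoc)
    then show ?thesis using G by simp
  qed
  have i2: "AGD1 ** A ** AGD1 = AGD1"
  proof -
    have "AGD1 ** A ** AGD1 = AGD ** (A ** Am ** A) ** AGD ** A ** Am" unfolding AGD1_def by (simp add: matrix_mul_assoc)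
    also have "\<dots> = (AGD ** A ** AGD ** A) ** Am" by (simp add: S)
    also have "\<dots> = AGD1" using GAGA AGD1_def by simp
    finally show ?thesis .
  qed
  have ii: "matpow A m ** AGD1 = matpow A m ** Am \<and> AGD1 ** matpow A m = AGD ** matpow A m"
    if "m \<ge> 1" for m
  proof -
    have "\<exists>k. m = Suc k" using that by presburger
    then obtain k where k: "m = Suc k" by blast

    have "matpow A m ** AGD1 = matpow A k ** (A ** AGD ** A) ** Am"
      unfolding k AGD1_def by (simp add: matrix_mul_assoc)
    also have "\<dots> = matpow A m ** Am" using G k by simp
    finally have 1: "matpow A m ** AGD1 = matpow A m ** Am" .
    have "AGD1 ** matpow A m = AGD ** A ** Am ** (A ** matpow A k)"
      unfolding k AGD1_def by (simp add: matpow_comm)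
    also have "\<dots> = AGD ** (A ** Am ** A) ** matpow A k"
      by (simp add: matrix_mul_assoc)
    also have "\<dots> = AGD ** (A ** matpow A k)" by (simp add: S)
    also have "\<dots> = AGD ** matpow A m" unfolding k by (simp add: matpow_comm)
    finally show ?thesis using 1 by simp
  qed
  have P1: "A ** AGD1 = A ** Am"
  proof -
    have "A ** AGD1 = (A ** AGD ** A) ** Am" unfolding AGD1_def by (simp add: matrix_mul_assoc)
    then show ?thesis using G by simp
  qed
  have P2: "AGD1 ** A = AGD ** A" unfolding AGD1_def
    by (simp add: S)
  have iii: "is_projector (A ** Am) (range_mat A) (null_mat (A ** Am))"
    unfolding is_projector_def range_mat_def null_mat_def
  proof (intro conjI allI ballI)
    show "{A *v x |x. True} \<inter> {x. (A ** Am) *v x = 0} = {0}"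
    proof -
      have H: "(A ** Am) *v (A *v y) = A *v y" for y by (simp add: matrix_vector_mul_assoc S)
      have "\<exists>x. A *v x = 0" by (rule exI[of _ 0]) simp
      then show ?thesis using H by auto
    qed
  next
    fix z :: "complex^'n"
    show "\<exists>x\<in>{A *v x |x. True}. \<exists>y\<in>{x. (A ** Am) *v x = 0}. z = x + y"
    proof (intro bexI)
      show "z = (A ** Am) *v z + (z - (A ** Am) *v z)" by simp
      show "(A ** Am) *v z \<in> {A *v x |x. True}" by (auto simp: matrix_vector_mul_assoc[symmetric])
      have "(A ** Am) *v ((A ** Am) *v z) = (A ** Am) *v z"
        by (simp add: matrix_vector_mul_assoc S)
      then show "z - (A ** Am) *v z \<in> {x. (A ** Am) *v x = 0}"
        by (simp add: matrix_vector_mult_diff_distrib)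
    qed
  next
    fix x assume "x \<in> {A *v x |x. True}"
    then obtain y where "x = A *v y" by auto
    then show "(A ** Am) *v x = x" by (simp add: matrix_vector_mul_assoc S)
  qed simp
  have iv: "is_projector (AGD ** A) (range_mat (AGD ** A)) (null_mat A)"
    unfolding is_projector_def range_mat_def null_mat_def
  proof (intro conjI allI ballI)
    show "{(AGD ** A) *v x |x. True} \<inter> {x. A *v x = 0} = {0}"
    proof -
      have H: "A *v y = 0 \<Longrightarrow> (AGD ** A) *v y = 0" for y
        by (simp add: matrix_vector_mul_assoc[symmetric])
      have H2: "A *v ((AGD ** A) *v y) = A *v y" for y
        by (simp add: matrix_vector_mul_assoc S)
      have "\<exists>x. (AGD ** A) *v x = 0" by (rule exI[of _ 0]) simp
      then show ?thesis using H H2 by auto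
    qed
  next
    fix z :: "complex^'n"
    show "\<exists>x\<in>{(AGD ** A) *v x |x. True}. \<exists>y\<in>{x. A *v x = 0}. z = x + y"
    proof (intro bexI)
      show "z = (AGD ** A) *v z + (z - (AGD ** A) *v z)" by simp
      show "(AGD ** A) *v z \<in> {(AGD ** A) *v x |x. True}" by auto
      have "A *v ((AGD ** A) *v z) = A *v z"
        by (simp add: matrix_vector_mul_assoc S)
      then show "z - (AGD ** A) *v z \<in> {x. A *v x = 0}"
        by (simp add: matrix_vector_mult_diff_distrib)
    qed
  next
    fix x assume "x \<in> {(AGD ** A) *v x |x. True}"
    then obtain y where "x = (AGD ** A) *v y" by auto
    then show "(AGD ** A) *v x = x" by (simp add: matrix_vector_mul_assoc S)
  next
    fix y assume "y \<in> {x. A *v x = 0}"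
    then show "(AGD ** A) *v y = 0" by (simp add: matrix_vector_mul_assoc[symmetric])
  qed
  show ?thesis using i1 i2 ii iii iv P1 P2 by simp
qed

end
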